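(* Let $d\ge1$, $\sigma_1>0$, $\beta>3$, $p_+\in(0,1)$ with $p_-:=1-p_+\ge\frac12$, and let $P_{XY}$ be the distribution with $\mathbb P(Y=+1)=p_+$, $\mathbb P(Y=-1)=p_-$, $X\mid Y=+1\sim\mathcal N(0,\sigma_1^2\mathbf I_d)$, $X\mid Y=-1\sim\mathcal N(0,\beta\sigma_1^2\mathbf I_d)$. Let $k_1,k_2>0$ and define $\psi(x)=k_1\|x\|_2^2+k_2$. Let $(X_1,Y_1),\dots,(X_N,Y_N)$ be training data with labels $Y_i\in\{\pm1\}$ such that $N_+:=\#\{i:Y_i=+1\}\ge1$ and $N_-:=\#\{i:Y_i=-1\}\ge1$, where, given the labels, the $X_i$ are independent with $X_i\sim\mathcal N(0,\sigma_1^2\mathbf I_d)$ if $Y_i=+1$ and $X_i\sim\mathcal N(0,\beta\sigma_1^2\mathbf I_d)$ if $Y_i=-1$. Set $Z_i=\psi(X_i)$, $$b=\frac12\Big(\frac{\sum_{i=1}^N\mathbf 1_{\{Y_i=+1\}}Z_i}{N_+}+\frac{\sum_{i=1}^N\mathbf 1_{\{Y_i=-1\}}Z_i}{N_-}\Big),$$ and $f_{ss}(x)=\mathrm{sign}(-\psi(x)+b)$, with $\mathrm{err}_{f_{ss}}=\mathbb P_{(X,Y)\sim P_{XY}}(f_{ss}(X)\neq Y)$ for $(X,Y)$ independent of the training data. Then for any $\delta\in\big(0,\frac{\beta-1}{\beta+1}\big)$, with probability (over the training data) at least $1-2e^{-N_-d\delta^2/8}-2e^{-N_+d\delta^2/8}$,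 $$\mathrm{err}_{f_{ss}}\le\begin{cases}p_+e^{-d\frac{(\beta-1-(1+\beta)\delta)^2}{32}}+p_-e^{-d\frac{(\beta-1-(1+\beta)\delta)^2}{32\beta^2}}, & \text{if }\delta\in\big[\frac{\beta-3}{\beta+1},\frac{\beta-1}{\beta+1}\big),\\[4pt] p_+e^{-d\frac{\beta-1-(1+\beta)\delta}{16}}+p_-e^{-d\frac{(\beta-1-(1+\beta)\delta)^2}{32\beta^2}}, & \text{if }\delta\in\big(0,\frac{\beta-3}{\beta+1}\big).\end{cases}$$
   Context: $\mathbf I_d$ is the $d\times d$ identity matrix. The map $\psi$ models a representation learned by self-supervision, and $f_{ss}$ is a linear classifier on the feature $Z=\psi(X)$ with intercept $b$ equal to the midpoint of the class-wise feature means on the training data. Ties $\psi(X)=b$ occur with probability zero. *)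

theory Defs
  imports "HOL-Probability.Probability"
begin

text \<open>Isotropic centred Gaussian N(0, s2 I_d) on a Euclidean space of dimension d = DIM('a):
  product of one-dimensional N(0, s2) densities in the coordinates w.r.t. the standard basis.\<close>
definition gauss_iso :: "real \<Rightarrow> 'a::euclidean_space measure" where
  "gauss_iso s2 = density lborel (\<lambda>x. ennreal (\<Prod>u\<in>Basis. normal_density 0 (sqrt s2) (x \<bullet> u)))"

definition psi_feat :: "real \<Rightarrow> real \<Rightarrow> 'a::euclidean_space \<Rightarrow> real" where
  "psi_feat k1 k2 x = k1 * (norm x)^2 + k2"

definition f_ss :: "real \<Rightarrow> real \<Rightarrow> real \<Rightarrow> 'a::euclidean_space \<Rightarrow> real" where
  "f_ss k1 k2 b x = sgn (- psi_feat k1 k2 x + b)"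

text \<open>Test error P_{(X,Y)~P_XY}(f(X) \<noteq> Y) for the mixture P_XY with P(Y=+1)=pp,
  P(Y=-1)=1-pp, X|Y=+1 ~ N(0,s2 I), X|Y=-1 ~ N(0, beta s2 I), written by the law of total
  probability over the label.\<close>
definition err_ss :: "real \<Rightarrow> real \<Rightarrow> real \<Rightarrow> real \<Rightarrow> real \<Rightarrow> real \<Rightarrow> 'a::euclidean_space itself \<Rightarrow> real" where
  "err_ss pp s2 beta k1 k2 b (_ :: 'a itself) =
     pp * measure (gauss_iso s2 :: 'a measure) {x. f_ss k1 k2 b x \<noteq> 1}
   + (1 - pp) * measure (gauss_iso (beta * s2) :: 'a measure) {x. f_ss k1 k2 b x \<noteq> -1}"

definition intercept :: "real \<Rightarrow> real \<Rightarrow> nat \<Rightarrow> (nat \<Rightarrow> real) \<Rightarrow> (nat \<Rightarrow> 'a::euclidean_space) \<Rightarrow> real" where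
  "intercept k1 k2 N Ys Xs =
     (1/2) * ((\<Sum>i\<in>{i. i < N \<and> Ys i = 1}. psi_feat k1 k2 (Xs i)) / card {i. i < N \<and> Ys i = 1}
            + (\<Sum>i\<in>{i. i < N \<and> Ys i = -1}. psi_feat k1 k2 (Xs i)) / card {i. i < N \<and> Ys i = -1})"

definition train_law :: "real \<Rightarrow> real \<Rightarrow> nat \<Rightarrow> (nat \<Rightarrow> real) \<Rightarrow> (nat \<Rightarrow> 'a::euclidean_space) measure" where
  "train_law s2 beta N Ys = PiM {..<N} (\<lambda>i. gauss_iso (if Ys i = 1 then s2 else beta * s2))"

end

theory Submission
  imports Defs
begin


lemma nd_exp_eq:
  fixes s2 c y :: real
  assumes "s2 > 0" "c < 1/2"
  shows "normal_density 0 (sqrt s2) y * exp (c * y^2 / s2)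
       = (1 / sqrt (1 - 2*c)) * normal_density 0 (sqrt (s2 / (1 - 2*c))) y"
proof -
  have q: "1 - 2*c > 0" using assms by simp
  have e: "exp (- (y^2) / (2 * s2)) * exp (c * y^2 / s2) = exp (- (y^2) / (2 * (s2 / (1 - 2*c))))"
    unfolding exp_add[symmetric] using assms q by (simp add: field_simps)
  have k: "1 / sqrt (2 * pi * s2) = (1 / sqrt (1 - 2*c)) * (1 / sqrt (2 * pi * (s2 / (1 - 2*c))))"
    using assms q by (simp add: real_sqrt_divide real_sqrt_mult field_simps)
  have "normal_density 0 (sqrt s2) y * exp (c * y^2 / s2)
      = (1 / sqrt (2 * pi * s2)) * (exp (- (y^2) / (2 * s2)) * exp (c * y^2 / s2))"
    unfolding normal_density_def using assms by simp
  also have "\<dots> = (1 / sqrt (1 - 2*c)) * ((1 / sqrt (2 * pi * (s2 / (1 - 2*c))))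
        * exp (- (y^2) / (2 * (s2 / (1 - 2*c)))))"
    unfolding e k by simp
  also have "\<dots> = (1 / sqrt (1 - 2*c)) * normal_density 0 (sqrt (s2 / (1 - 2*c))) y"
    unfolding normal_density_def using assms q by simp
  finally show ?thesis .
qed

lemma mgf1:
  fixes s2 c :: real
  assumes "s2 > 0" "c < 1/2"
  shows "(\<integral>\<^sup>+y. ennreal (normal_density 0 (sqrt s2) y * exp (c * y^2 / s2)) \<partial>lborel)
       = ennreal (1 / sqrt (1 - 2*c))"
proof -
  have q: "1 - 2*c > 0" using assms by simp
  let ?s = "sqrt (s2 / (1 - 2*c))"
  have sp: "?s > 0" using assms q by simp
  have one: "(\<integral>\<^sup>+y. ennreal (normal_density 0 ?s y) \<partial>lborel) = 1"
    using integrable_normal_density[OF sp] integral_normal_density[OF sp]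
    by (subst nn_integral_eq_integral) auto
  have "(\<integral>\<^sup>+y. ennreal (normal_density 0 (sqrt s2) y * exp (c * y^2 / s2)) \<partial>lborel)
      = (\<integral>\<^sup>+y. ennreal (1 / sqrt (1 - 2*c)) * ennreal (normal_density 0 ?s y) \<partial>lborel)"
    using assms by (intro nn_integral_cong, subst ennreal_mult[symmetric]) (auto simp: nd_exp_eq[OF assms] q)
  also have "\<dots> = ennreal (1 / sqrt (1 - 2*c)) * (\<integral>\<^sup>+y. ennreal (normal_density 0 ?s y) \<partial>lborel)"
    by (rule nn_integral_cmult) simp
  finally show ?thesis using one by simp
qed

lemma norm_sq_basis: "(norm (x::'a::euclidean_space))^2 = (\<Sum>b\<in>Basis. (x \<bullet> b)^2)"
  unfolding power2_norm_eq_inner by (subst euclidean_inner) (simp add: power2_eq_square)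

lemma mgfd:
  fixes s2 c :: real
  assumes "s2 > 0" "c < 1/2"
  shows "(\<integral>\<^sup>+x. ennreal (exp (c * (norm x)^2 / s2)) \<partial>(gauss_iso s2 :: 'a::euclidean_space measure))
       = ennreal ((1 / sqrt (1 - 2*c)) ^ DIM('a))"
proof -
  let ?f = "\<lambda>b y. ennreal (normal_density 0 (sqrt s2) y * exp (c * y^2 / s2))"
  have "(\<integral>\<^sup>+x. ennreal (exp (c * (norm x)^2 / s2)) \<partial>(gauss_iso s2 :: 'a measure))
      = (\<integral>\<^sup>+x. ennreal (\<Prod>u\<in>Basis. normal_density 0 (sqrt s2) (x \<bullet> u)) * ennreal (exp (c * (norm x)^2 / s2)) \<partial>(lborel :: 'a measure))"
    unfolding gauss_iso_def by (subst nn_integral_density) auto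
  also have "\<dots> = (\<integral>\<^sup>+x. (\<Prod>b\<in>Basis. ?f b (x \<bullet> b)) \<partial>(lborel :: 'a measure))"
  proof (intro nn_integral_cong)
    fix x :: 'a
    have "exp (c * (norm x)^2 / s2) = (\<Prod>b\<in>Basis. exp (c * (x \<bullet> b)^2 / s2))"
      unfolding norm_sq_basis sum_distrib_left sum_divide_distrib by (simp add: exp_sum)
    then show "ennreal (\<Prod>u\<in>Basis. normal_density 0 (sqrt s2) (x \<bullet> u)) * ennreal (exp (c * (norm x)^2 / s2))
        = (\<Prod>b\<in>Basis. ?f b (x \<bullet> b))"
      by (simp add: prod_ennreal ennreal_mult[symmetric] prod.distrib[symmetric] prod_nonneg)
  qed
  also have "\<dots> = (\<Prod>b\<in>(Basis::'a set). \<integral>\<^sup>+y. ?f b y \<partial>lborel)"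
    by (rule nn_integral_lborel_prod) auto
  also have "\<dots> = (\<Prod>b\<in>(Basis::'a set). ennreal (1 / sqrt (1 - 2*c)))"
    using mgf1[OF assms] by simp
  also have "\<dots> = ennreal ((1 / sqrt (1 - 2*c)) ^ DIM('a))"
    using assms by (subst ennreal_power[symmetric]) auto
  finally show ?thesis .
qed

lemma prob_gauss: "s2 > 0 \<Longrightarrow> prob_space (gauss_iso s2 :: 'a::euclidean_space measure)"
  apply (rule prob_spaceI)
  using mgfd[of s2 0, where 'a='a] unfolding gauss_iso_def
  by (simp add: emeasure_density nn_integral_density)

lemma sets_gauss[simp]: "sets (gauss_iso s2 :: 'a::euclidean_space measure) = sets borel"
  by (simp add: gauss_iso_def)

lemma space_gauss[simp]: "space (gauss_iso s2 :: 'a::euclidean_space measure) = UNIV"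
  by (simp add: gauss_iso_def)

lemma meas_gauss: "f \<in> borel_measurable borel \<Longrightarrow> f \<in> borel_measurable (gauss_iso s2 :: 'a::euclidean_space measure)"
  using measurable_cong_sets[OF sets_gauss refl] by blast

lemma mgf_train:
  fixes V :: "nat \<Rightarrow> real" and I :: "nat set" and v c :: real
  assumes Vp: "\<forall>i. V i > 0" and IN: "I \<subseteq> {..<N}" and Vv: "\<forall>i\<in>I. V i = v" and c: "c < 1/2"
  shows "(\<integral>\<^sup>+Xs. ennreal (exp (c * (\<Sum>i\<in>I. (norm (Xs i))^2 / v)))
            \<partial>(PiM {..<N} (\<lambda>i. gauss_iso (V i) :: 'a::euclidean_space measure)))
       = ennreal ((1 / sqrt (1 - 2*c)) ^ (card I * DIM('a)))"
proof -
  let ?M = "\<lambda>i. gauss_iso (V i) :: 'a measure"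
  have ps: "\<And>i. prob_space (?M i)" using prob_gauss Vp by blast
  interpret product_sigma_finite ?M
    unfolding product_sigma_finite_def using ps prob_space_imp_sigma_finite by blast
  have finI: "finite I" using IN finite_subset by blast
  let ?q = "(1 / sqrt (1 - 2*c)) ^ DIM('a)"
  let ?F = "\<lambda>i x. if i \<in> I then ennreal (exp (c * (norm x)^2 / v)) else 1"
  have "(\<integral>\<^sup>+Xs. ennreal (exp (c * (\<Sum>i\<in>I. (norm (Xs i))^2 / v))) \<partial>PiM {..<N} ?M)
      = (\<integral>\<^sup>+Xs. (\<Prod>i\<in>{..<N}. ?F i (Xs i)) \<partial>PiM {..<N} ?M)"
  proof (intro nn_integral_cong)
    fix Xs :: "nat \<Rightarrow> 'a"
    have "(\<Prod>i\<in>{..<N}. ?F i (Xs i)) = (\<Prod>i\<in>I. ennreal (exp (c * (norm (Xs i))^2 / v)))"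
      using IN by (subst prod.If_cases) (auto intro!: prod.cong simp: Int_absorb1 Int_commute)
    also have "\<dots> = ennreal (exp (c * (\<Sum>i\<in>I. (norm (Xs i))^2 / v)))"
      using finI by (simp add: prod_ennreal sum_distrib_left exp_sum)
    finally show "ennreal (exp (c * (\<Sum>i\<in>I. (norm (Xs i))^2 / v))) = (\<Prod>i\<in>{..<N}. ?F i (Xs i))" ..
  qed
  also have "\<dots> = (\<Prod>i\<in>{..<N}. integral\<^sup>N (?M i) (?F i))"
    by (rule product_nn_integral_prod) (simp, rule meas_gauss, measurable)
  also have "\<dots> = (\<Prod>i\<in>{..<N}. if i \<in> I then ennreal ?q else 1)"
  proof (intro prod.cong refl)
    fix i assume "i \<in> {..<N}"
    show "integral\<^sup>N (?M i) (?F i) = (if i \<in> I then ennreal ?q else 1)"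
    proof (cases "i \<in> I")
      case True
      then have "V i = v" using Vv by auto
      then show ?thesis using True mgfd[of v c, where 'a='a] Vp c \<open>V i = v\<close> by auto
    next
      case False
      then show ?thesis using prob_space.emeasure_space_1[OF ps[of i]] by simp
    qed
  qed
  also have "\<dots> = ennreal ?q ^ card I"
    using IN by (subst prod.If_cases) (auto simp: Int_absorb1 Int_commute inf.absorb_iff2)
  also have "\<dots> = ennreal ((1 / sqrt (1 - 2*c)) ^ (card I * DIM('a)))"
    using c by (subst ennreal_power) (auto simp: power_mult mult.commute)
  finally show ?thesis .
qed

lemma lnb1:
  fixes e :: real assumes "0 \<le> e" "e \<le> 1"
  shows "ln (1 + e) \<le> e - e^2/4"
proof -
  let ?f = "\<lambda>x::real. x - x^2/4 - ln (1 + x)"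
  have "?f 0 \<le> ?f e"
  proof (rule DERIV_nonneg_imp_increasing_open[OF assms(1)])
    fix x :: real assume x: "0 < x" "x < e"
    have "(?f has_real_derivative (1 - x/2 - 1/(1+x))) (at x)"
      using x by (auto intro!: derivative_eq_intros simp: field_simps)
    moreover have "1 - x/2 - 1/(1+x) \<ge> 0"
    proof -
      have "1 - x/2 - 1/(1+x) = x * (1 - x) / (2 * (1 + x))" using x by (simp add: field_simps)
      also have "\<dots> \<ge> 0" using x assms by (intro divide_nonneg_pos mult_nonneg_nonneg) auto
      finally show ?thesis .
    qed
    ultimately show "\<exists>y. (?f has_real_derivative y) (at x) \<and> 0 \<le> y" by blast
  next
    show "continuous_on {0..e} ?f"
      by (intro continuous_intros) auto
  qed
  then show ?thesis by simp
qed

lemma ln2_le: "ln (2::real) \<le> 3/4"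
proof -
  have "(9/8::real)^6 \<le> exp (1/8) ^ 6"
    using exp_ge_add_one_self[of "1/8::real"] by (intro power_mono) auto
  also have "exp (1/8::real) ^ 6 = exp (3/4)"
    by (subst exp_of_nat_mult[symmetric]) simp
  finally have "(9/8::real)^6 \<le> exp (3/4)" .
  moreover have "(2::real) \<le> (9/8)^6" by (simp add: power_def)
  ultimately have "2 \<le> exp (3/4::real)" by linarith
  then show ?thesis using ln_exp[of "3/4::real"] ln_le_cancel_iff[of 2 "exp (3/4::real)"] by simp
qed

lemma lnb2:
  fixes e :: real assumes "1 \<le> e"
  shows "ln (1 + e) \<le> 3/4 * e"
proof -
  have "ln (1 + e) = ln 2 + ln ((1 + e)/2)" using assms by (simp add: ln_div)
  moreover have "ln ((1 + e)/2) \<le> (1 + e)/2 - 1" using assms by (intro ln_le_minus_one) auto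
  ultimately have "ln (1 + e) \<le> ln 2 + ((1 + e)/2 - 1)" by linarith
  also have "\<dots> \<le> 3/4 + ((1 + e)/2 - 1)" using ln2_le by simp
  also have "\<dots> \<le> 3/4 * e" using assms by (simp add: field_simps)
  finally show ?thesis .
qed

lemma markov_exp:
  assumes P: "prob_space M" and S[measurable]: "S \<in> borel_measurable M"
  shows "emeasure M {x\<in>space M. a \<le> c * S x} \<le> ennreal (exp (-a)) * (\<integral>\<^sup>+x. ennreal (exp (c * S x)) \<partial>M)"
proof -
  have "emeasure M {x\<in>space M. a \<le> c * S x} = (\<integral>\<^sup>+x. indicator {x\<in>space M. a \<le> c * S x} x \<partial>M)"
    by simp
  also have "\<dots> \<le> (\<integral>\<^sup>+x. ennreal (exp (-a)) * ennreal (exp (c * S x)) \<partial>M)"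
  proof (intro nn_integral_mono)
    fix x assume "x \<in> space M"
    show "indicator {x\<in>space M. a \<le> c * S x} x \<le> ennreal (exp (-a)) * ennreal (exp (c * S x))"
    proof (cases "a \<le> c * S x")
      case True
      then show ?thesis using True \<open>x \<in> space M\<close> by (simp add: ennreal_mult[symmetric] indicator_def exp_add[symmetric])
    qed (simp add: indicator_def)
  qed
  also have "\<dots> = ennreal (exp (-a)) * (\<integral>\<^sup>+x. ennreal (exp (c * S x)) \<partial>M)"
    by (rule nn_integral_cmult) simp
  finally show ?thesis .
qed

lemma pow_sqrt_exp: "(y::real) > 0 \<Longrightarrow> (1 / sqrt y) ^ n = exp (- real n * ln y / 2)"
proof -
  assume y: "y > 0"
  have "1 / sqrt y = exp (- ln y / 2)"
    using y by (simp add: exp_minus ln_sqrt[symmetric] inverse_eq_divide)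
  then have "(1 / sqrt y) ^ n = exp (- ln y / 2) ^ n" by simp
  also have "\<dots> = exp (real n * (- ln y / 2))" by (rule exp_of_nat_mult[symmetric])
  finally show ?thesis by simp
qed

locale chern =
  fixes M :: "'b measure" and S :: "'b \<Rightarrow> real" and n :: nat
  assumes P: "prob_space M" and S[measurable]: "S \<in> borel_measurable M"
    and mgf: "\<And>c. c < 1/2 \<Longrightarrow> (\<integral>\<^sup>+x. ennreal (exp (c * S x)) \<partial>M) = ennreal ((1 / sqrt (1 - 2*c)) ^ n)"
begin

lemma meas_le:
  assumes "emeasure M A \<le> ennreal r" "r \<ge> 0"
  shows "measure M A \<le> r"
proof -
  interpret prob_space M by (rule P)
  show ?thesis using assms by (simp add: emeasure_eq_measure)
qed

lemma upper:
  assumes e: "0 < e"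
  shows "measure M {x\<in>space M. real n * (1 + e) \<le> S x} \<le> exp (- real n * (e - ln (1 + e)) / 2)"
proof (rule meas_le)
  define c where "c = e / (2 * (1 + e))"
  have c0: "c > 0" using e by (simp add: c_def)
  have c1: "c < 1/2" using e by (simp add: c_def field_simps)
  have q: "1 - 2*c = 1 / (1 + e)" using e by (simp add: c_def field_simps)
  have set: "{x\<in>space M. real n * (1 + e) \<le> S x} = {x\<in>space M. c * (real n * (1 + e)) \<le> c * S x}"
    using c0 by auto
  have a: "c * (real n * (1 + e)) = real n * e / 2" using e by (simp add: c_def field_simps)
  have "(1 / sqrt (1 - 2*c)) ^ n = exp (real n * ln (1 + e) / 2)"
    using e by (simp add: q pow_sqrt_exp ln_div)
  then have "emeasure M {x\<in>space M. real n * (1 + e) \<le> S x}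
      \<le> ennreal (exp (- (real n * e / 2))) * ennreal (exp (real n * ln (1 + e) / 2))"
    using markov_exp[OF P S, of "c * (real n * (1 + e))" c] mgf[OF c1] unfolding set a by simp
  also have "\<dots> = ennreal (exp (- real n * (e - ln (1 + e)) / 2))"
    by (simp add: ennreal_mult[symmetric] exp_add[symmetric] field_simps)
  finally show "emeasure M {x\<in>space M. real n * (1 + e) \<le> S x} \<le> ennreal (exp (- real n * (e - ln (1 + e)) / 2))" .
qed simp

lemma upper1:
  assumes "0 < e" "e \<le> 1"
  shows "measure M {x\<in>space M. real n * (1 + e) \<le> S x} \<le> exp (- real n * e^2 / 8)"
proof -
  have d: "- real n * e^2 / 8 - (- real n * (e - ln (1 + e)) / 2) = real n * ((e - e^2/4) - ln (1 + e)) / 2"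
    by (simp add: field_simps)
  have "0 \<le> real n * ((e - e^2/4) - ln (1 + e)) / 2"
    using lnb1[of e] assms by simp
  then have "- real n * (e - ln (1 + e)) / 2 \<le> - real n * e^2 / 8" using d by linarith
  then show ?thesis using upper[OF assms(1)] by (meson order_trans exp_le_cancel_iff)
qed

lemma upper2:
  assumes "1 \<le> e"
  shows "measure M {x\<in>space M. real n * (1 + e) \<le> S x} \<le> exp (- real n * e / 8)"
proof -
  have d: "- real n * e / 8 - (- real n * (e - ln (1 + e)) / 2) = real n * (3/4 * e - ln (1 + e)) / 2"
    by (simp add: field_simps)
  have "0 \<le> real n * (3/4 * e - ln (1 + e)) / 2"
    using lnb2[of e] assms by simp
  then have "- real n * (e - ln (1 + e)) / 2 \<le> - real n * e / 8" using d by linarith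
  then show ?thesis using upper[of e] assms by (meson order_trans exp_le_cancel_iff less_le_trans zero_less_one)
qed

lemma lower:
  assumes e: "0 < e" "e < 1"
  shows "measure M {x\<in>space M. S x \<le> real n * (1 - e)} \<le> exp (- real n * e^2 / 8)"
proof (rule meas_le)
  define c where "c = - e / 4"
  have c0: "c < 0" using e by (simp add: c_def)
  have c1: "c < 1/2" using e by (simp add: c_def)
  have q: "1 - 2*c = 1 + e/2" by (simp add: c_def)
  have set: "{x\<in>space M. S x \<le> real n * (1 - e)} = {x\<in>space M. c * (real n * (1 - e)) \<le> c * S x}"
    using c0 by (auto simp: mult_le_cancel_left)
  have "(1 / sqrt (1 - 2*c)) ^ n = exp (- real n * ln (1 + e/2) / 2)"
    using e by (simp add: q pow_sqrt_exp)
  then have "emeasure M {x\<in>space M. S x \<le> real n * (1 - e)}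
      \<le> ennreal (exp (- (c * (real n * (1 - e))))) * ennreal (exp (- real n * ln (1 + e/2) / 2))"
    using markov_exp[OF P S, of "c * (real n * (1 - e))" c] mgf[OF c1] unfolding set by simp
  also have "\<dots> = ennreal (exp (- (c * (real n * (1 - e))) - real n * ln (1 + e/2) / 2))"
    by (simp add: ennreal_mult[symmetric] exp_add[symmetric])
  also have "\<dots> \<le> ennreal (exp (- real n * e^2 / 8))"
  proof -
    have l: "e/2 - (e/2)^2 \<le> ln (1 + e/2)" using e by (intro ln_one_plus_pos_lower_bound) auto
    have "real n * (e/2 - (e/2)^2) \<le> real n * ln (1 + e/2)" using l by (simp add: mult_left_mono)
    then have "- (c * (real n * (1 - e))) - real n * ln (1 + e/2) / 2 \<le> - real n * e^2 / 8"
      by (simp add: c_def field_simps power2_eq_square)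
    then show ?thesis by (simp add: ennreal_leI)
  qed
  finally show "emeasure M {x\<in>space M. S x \<le> real n * (1 - e)} \<le> ennreal (exp (- real n * e^2 / 8))" .
qed simp

end

lemma set1:
  assumes "k1 > 0" "s2 > 0"
  shows "{x. f_ss k1 k2 (k2 + k1 * s2 * t) x \<noteq> 1} = {x. t \<le> (norm x)^2 / s2}"
proof -
  have "f_ss k1 k2 (k2 + k1 * s2 * t) x \<noteq> 1 \<longleftrightarrow> t \<le> (norm x)^2 / s2" for x :: 'a
  proof -
    have "f_ss k1 k2 (k2 + k1 * s2 * t) x \<noteq> 1 \<longleftrightarrow> k1 * (s2 * t) \<le> k1 * (norm x)^2"
      by (auto simp: f_ss_def psi_feat_def sgn_if algebra_simps)
    also have "\<dots> \<longleftrightarrow> t \<le> (norm x)^2 / s2"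
      using assms by (simp add: pos_le_divide_eq mult.commute)
    finally show ?thesis .
  qed
  then show ?thesis by auto
qed

lemma set2:
  assumes "k1 > 0" "s2 > 0" "beta > 0"
  shows "{x. f_ss k1 k2 (k2 + k1 * s2 * t) x \<noteq> -1} = {x. (norm x)^2 / (beta * s2) \<le> t / beta}"
proof -
  have "f_ss k1 k2 (k2 + k1 * s2 * t) x \<noteq> -1 \<longleftrightarrow> (norm x)^2 / (beta * s2) \<le> t / beta" for x :: 'a
  proof -
    have "f_ss k1 k2 (k2 + k1 * s2 * t) x \<noteq> -1 \<longleftrightarrow> k1 * (norm x)^2 \<le> k1 * (s2 * t)"
      by (auto simp: f_ss_def psi_feat_def sgn_if algebra_simps)
    also have "\<dots> \<longleftrightarrow> (norm x)^2 / (beta * s2) \<le> t / beta"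
      using assms by (simp add: divide_le_eq le_divide_eq field_simps)
    finally show ?thesis .
  qed
  then show ?thesis by auto
qed

lemma chern_gauss:
  assumes "s2 > 0"
  shows "chern (gauss_iso s2 :: 'a::euclidean_space measure) (\<lambda>x. (norm x)^2 / s2) DIM('a)"
proof (rule chern.intro)
  show "prob_space (gauss_iso s2 :: 'a measure)" using prob_gauss assms by blast
  show "(\<lambda>x. (norm x)^2 / s2) \<in> borel_measurable (gauss_iso s2 :: 'a measure)"
    by (rule meas_gauss) measurable
  show "\<And>c. c < 1/2 \<Longrightarrow> (\<integral>\<^sup>+x. ennreal (exp (c * ((norm x)^2 / s2))) \<partial>(gauss_iso s2 :: 'a measure)) = ennreal ((1 / sqrt (1 - 2*c)) ^ DIM('a))"
    using mgfd[OF assms, where 'a='a] by simp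
qed

lemma err_bound:
  fixes s2 beta pp k1 k2 delta t :: real and TYPE_a :: "'a::euclidean_space itself"
  assumes s2: "s2 > 0" and beta: "beta > 3"
    and pp: "0 < pp" "pp < 1"
    and k1: "k1 > 0"
    and dl: "0 < delta" "delta < (beta - 1) / (beta + 1)"
    and tl: "real DIM('a) * (1 - delta) * (1 + beta) / 2 \<le> t"
    and tu: "t \<le> real DIM('a) * (1 + delta) * (1 + beta) / 2"
  shows "let d = real DIM('a); g = beta - 1 - (1 + beta) * delta
     in err_ss pp s2 beta k1 k2 (k2 + k1 * s2 * t) TYPE('a) \<le>
        (if (beta - 3) / (beta + 1) \<le> delta
                  then pp * exp (- d * g^2 / 32) + (1 - pp) * exp (- d * g^2 / (32 * beta^2))
                  else pp * exp (- d * g / 16) + (1 - pp) * exp (- d * g^2 / (32 * beta^2)))"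
proof -
  define d where "d = real DIM('a)"
  define g where "g = beta - 1 - (1 + beta) * delta"
  have bp: "beta + 1 > 0" using beta by simp
  have bd: "0 < beta * delta" using beta dl by simp
  have g0: "g > 0" using dl bp unfolding g_def by (simp add: field_simps)
  have g2: "g \<le> 2 \<longleftrightarrow> (beta - 3) / (beta + 1) \<le> delta"
    using bp unfolding g_def by (simp add: divide_le_eq field_simps)
  interpret A: chern "gauss_iso s2 :: 'a measure" "\<lambda>x. (norm x)^2 / s2" "DIM('a)"
    by (rule chern_gauss[OF s2])
  interpret B: chern "gauss_iso (beta * s2) :: 'a measure" "\<lambda>x. (norm x)^2 / (beta * s2)" "DIM('a)"
    by (rule chern_gauss) (use s2 beta in simp)
  have pA: "prob_space (gauss_iso s2 :: 'a measure)" by (rule A.P)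
  have pB: "prob_space (gauss_iso (beta * s2) :: 'a measure)" by (rule B.P)
  have T1: "measure (gauss_iso s2 :: 'a measure) {x. f_ss k1 k2 (k2 + k1 * s2 * t) x \<noteq> 1}
      \<le> measure (gauss_iso s2 :: 'a measure) {x\<in>space (gauss_iso s2 :: 'a measure). d * (1 + g/2) \<le> (norm x)^2 / s2}"
  proof -
    interpret prob_space "gauss_iso s2 :: 'a measure" by (rule pA)
    have "d * (1 + g/2) = d * (1 - delta) * (1 + beta) / 2" unfolding g_def by (simp add: field_simps)
    then have "d * (1 + g/2) \<le> t" using tl unfolding d_def by linarith
    then show ?thesis unfolding set1[OF k1 s2]
      by (intro finite_measure_mono) auto
  qed
  have T2: "measure (gauss_iso (beta * s2) :: 'a measure) {x. f_ss k1 k2 (k2 + k1 * s2 * t) x \<noteq> -1}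
      \<le> measure (gauss_iso (beta * s2) :: 'a measure) {x\<in>space (gauss_iso (beta * s2) :: 'a measure). (norm x)^2 / (beta * s2) \<le> d * (1 - g/(2*beta))}"
  proof -
    interpret prob_space "gauss_iso (beta * s2) :: 'a measure" by (rule pB)
    have "d * (1 - g/(2*beta)) = d * (1 + delta) * (1 + beta) / 2 / beta" unfolding g_def using beta by (simp add: field_simps)
    moreover have "t / beta \<le> d * (1 + delta) * (1 + beta) / 2 / beta" unfolding d_def by (rule divide_right_mono[OF tu]) (use beta in simp)
    ultimately have "t / beta \<le> d * (1 - g/(2*beta))" by linarith
    moreover have b0: "beta > 0" using beta by simp
    ultimately show ?thesis unfolding set2[OF k1 s2 b0]
      by (intro finite_measure_mono) auto
  qed
  have L: "measure (gauss_iso (beta * s2) :: 'a measure) {x. f_ss k1 k2 (k2 + k1 * s2 * t) x \<noteq> -1}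
       \<le> exp (- d * g^2 / (32 * beta^2))"
  proof -
    have "(1 + beta) * delta > 0" using beta dl by simp
    then have "g < 2 * beta" unfolding g_def using beta by linarith
    then have e: "0 < g/(2*beta)" "g/(2*beta) < 1" using g0 beta by simp_all
    have "exp (- d * (g/(2*beta))^2 / 8) = exp (- d * g^2 / (32 * beta^2))"
      by (simp add: power_divide power_mult_distrib field_simps)
    then show ?thesis using T2 B.lower[OF e] unfolding d_def by simp
  qed
  show ?thesis
  proof (cases "(beta - 3) / (beta + 1) \<le> delta")
    case True
    have e: "0 < g/2" "g/2 \<le> 1" using g0 g2 True by auto
    have eq: "exp (- real DIM('a) * (g/2)^2 / 8) = exp (- d * g^2 / 32)"
      unfolding d_def by (simp add: power_divide field_simps)
    have U: "measure (gauss_iso s2 :: 'a measure) {x. f_ss k1 k2 (k2 + k1 * s2 * t) x \<noteq> 1} \<le> exp (- d * g^2 / 32)"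
      using order_trans[OF T1[unfolded d_def] A.upper1[OF e]] unfolding eq .
    show ?thesis using True unfolding Let_def err_ss_def d_def[symmetric] g_def[symmetric]
      using U L pp by (simp only: if_True if_False) (intro add_mono mult_left_mono, auto)
  next
    case False
    have e: "1 \<le> g/2" using g0 g2 False by auto
    have eq: "exp (- real DIM('a) * (g/2) / 8) = exp (- d * g / 16)"
      unfolding d_def by (simp add: field_simps)
    have U: "measure (gauss_iso s2 :: 'a measure) {x. f_ss k1 k2 (k2 + k1 * s2 * t) x \<noteq> 1} \<le> exp (- d * g / 16)"
      using order_trans[OF T1[unfolded d_def] A.upper2[OF e]] unfolding eq .
    show ?thesis using False unfolding Let_def err_ss_def d_def[symmetric] g_def[symmetric]
      using U L pp by (simp only: if_True if_False) (intro add_mono mult_left_mono, auto)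
  qed
qed

lemma fss_set1: "{x. f_ss k1 k2 b x \<noteq> 1} = {x. b \<le> psi_feat k1 k2 x}"
  by (auto simp: f_ss_def sgn_if)

lemma fss_set2: "{x. f_ss k1 k2 b x \<noteq> -1} = {x. psi_feat k1 k2 x \<le> b}"
  by (auto simp: f_ss_def sgn_if)

lemma psi_meas[measurable]: "psi_feat k1 k2 \<in> borel_measurable borel"
  unfolding psi_feat_def[abs_def] by measurable

lemma err_meas:
  assumes s2: "s2 > 0" and b2: "beta * s2 > 0"
  shows "(\<lambda>b. err_ss pp s2 beta k1 k2 b TYPE('a::euclidean_space)) \<in> borel_measurable borel"
proof -
  let ?h1 = "\<lambda>b. measure (gauss_iso s2 :: 'a measure) {x. b \<le> psi_feat k1 k2 x}"
  let ?h2 = "\<lambda>b. measure (gauss_iso (beta * s2) :: 'a measure) {x. psi_feat k1 k2 x \<le> b}"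
  have m1: "(\<lambda>b. - ?h1 b) \<in> borel_measurable borel"
  proof (rule borel_measurable_mono, rule monoI)
    fix a b :: real assume "a \<le> b"
    interpret prob_space "gauss_iso s2 :: 'a measure" using prob_gauss s2 by blast
    have "?h1 b \<le> ?h1 a" using \<open>a \<le> b\<close> by (intro finite_measure_mono) auto
    then show "- ?h1 a \<le> - ?h1 b" by simp
  qed
  have m2: "?h2 \<in> borel_measurable borel"
  proof (rule borel_measurable_mono, rule monoI)
    fix a b :: real assume "a \<le> b"
    interpret prob_space "gauss_iso (beta * s2) :: 'a measure" using prob_gauss b2 by blast
    show "?h2 a \<le> ?h2 b" using \<open>a \<le> b\<close> by (intro finite_measure_mono) auto
  qed
  have "(\<lambda>b. err_ss pp s2 beta k1 k2 b TYPE('a)) = (\<lambda>b. pp * - (- ?h1 b) + (1 - pp) * ?h2 b)"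
    by (simp add: err_ss_def fss_set1 fss_set2)
  then show ?thesis using m1 m2 by simp
qed

lemma comp_meas:
  assumes "i < N" "f \<in> borel_measurable borel"
  shows "(\<lambda>Xs. f (Xs i)) \<in> borel_measurable (PiM {..<N} (\<lambda>i. gauss_iso (V i) :: 'a::euclidean_space measure))"
proof -
  have "(\<lambda>Xs. Xs i) \<in> measurable (PiM {..<N} (\<lambda>i. gauss_iso (V i) :: 'a measure)) (gauss_iso (V i))"
    by (rule measurable_component_singleton) (use assms in auto)
  moreover have "f \<in> borel_measurable (gauss_iso (V i) :: 'a measure)" by (rule meas_gauss[OF assms(2)])
  ultimately show ?thesis by (rule measurable_compose)
qed

lemma main:
  fixes s2 beta pp k1 k2 delta :: real and N :: nat and Ys :: "nat \<Rightarrow> real"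
    and TYPE_a :: "'a::euclidean_space itself"
  assumes s2: "s2 > 0" and beta: "beta > 3"
    and pp: "0 < pp" "pp < 1" and "1 - pp \<ge> 1/2"
    and k1: "k1 > 0" and "k2 > 0"
    and Ys: "\<forall>i<N. Ys i = 1 \<or> Ys i = -1"
    and cp: "card {i. i < N \<and> Ys i = 1} \<ge> 1" and cm: "card {i. i < N \<and> Ys i = -1} \<ge> 1"
    and dl: "0 < delta" "delta < (beta - 1) / (beta + 1)"
  shows
    "let d = real DIM('a); Np = real (card {i. i < N \<and> Ys i = 1});
         Nm = real (card {i. i < N \<and> Ys i = -1});
         M = (train_law s2 beta N Ys :: (nat \<Rightarrow> 'a) measure);
         g = beta - 1 - (1 + beta) * delta;
         bound = (if (beta - 3) / (beta + 1) \<le> delta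
                  then pp * exp (- d * g^2 / 32) + (1 - pp) * exp (- d * g^2 / (32 * beta^2))
                  else pp * exp (- d * g / 16) + (1 - pp) * exp (- d * g^2 / (32 * beta^2)))
     in measure M {Xs \<in> space M.
           err_ss pp s2 beta k1 k2 (intercept k1 k2 N Ys Xs) TYPE('a) \<le> bound}
        \<ge> 1 - 2 * exp (- Nm * d * delta^2 / 8) - 2 * exp (- Np * d * delta^2 / 8)"
proof -
  define Ip where "Ip = {i. i < N \<and> Ys i = 1}"
  define Im where "Im = {i. i < N \<and> Ys i = -1}"
  define V where "V = (\<lambda>i. if Ys i = 1 then s2 else beta * s2)"
  define M where "M = (train_law s2 beta N Ys :: (nat \<Rightarrow> 'a) measure)"
  define d where "d = real DIM('a)"
  define g where "g = beta - 1 - (1 + beta) * delta"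
  define bound where "bound = (if (beta - 3) / (beta + 1) \<le> delta
                  then pp * exp (- d * g^2 / 32) + (1 - pp) * exp (- d * g^2 / (32 * beta^2))
                  else pp * exp (- d * g / 16) + (1 - pp) * exp (- d * g^2 / (32 * beta^2)))"
  define Sp where "Sp = (\<lambda>Xs::nat \<Rightarrow> 'a. \<Sum>i\<in>Ip. (norm (Xs i))^2 / s2)"
  define Sm where "Sm = (\<lambda>Xs::nat \<Rightarrow> 'a. \<Sum>i\<in>Im. (norm (Xs i))^2 / (beta * s2))"
  define np where "np = card Ip * DIM('a)"
  define nm where "nm = card Im * DIM('a)"
  have b0: "beta > 0" and bs: "beta * s2 > 0" using beta s2 by auto
  have Vp: "\<forall>i. V i > 0" using s2 bs by (simp add: V_def)
  have Meq: "M = PiM {..<N} (\<lambda>i. gauss_iso (V i))" by (simp add: M_def train_law_def V_def)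
  have IpN: "Ip \<subseteq> {..<N}" and ImN: "Im \<subseteq> {..<N}" by (auto simp: Ip_def Im_def)
  have finIp: "finite Ip" and finIm: "finite Im" using IpN ImN finite_subset by blast+
  have Ipc: "card Ip > 0" and Imc: "card Im > 0" using cp cm by (auto simp: Ip_def Im_def)
  have PM: "prob_space M" unfolding Meq by (rule prob_space_PiM) (use prob_gauss Vp in blast)
  interpret prob_space M by (rule PM)
  have "(beta - 1) / (beta + 1) < 1" using beta by simp
  then have d1: "delta < 1" using dl by linarith
  have mSp: "Sp \<in> borel_measurable M" unfolding Sp_def Meq
    by (rule borel_measurable_sum, rule comp_meas) (use IpN in auto)
  have mSm: "Sm \<in> borel_measurable M" unfolding Sm_def Meq
    by (rule borel_measurable_sum, rule comp_meas) (use ImN in auto)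
  interpret CP: chern M Sp np
  proof (rule chern.intro[OF PM mSp])
    fix c :: real assume "c < 1/2"
    show "(\<integral>\<^sup>+x. ennreal (exp (c * Sp x)) \<partial>M) = ennreal ((1 / sqrt (1 - 2*c)) ^ np)"
      unfolding Meq Sp_def np_def
      by (rule mgf_train[OF Vp IpN _ \<open>c < 1/2\<close>]) (auto simp: V_def Ip_def)
  qed
  interpret CM: chern M Sm nm
  proof (rule chern.intro[OF PM mSm])
    fix c :: real assume "c < 1/2"
    show "(\<integral>\<^sup>+x. ennreal (exp (c * Sm x)) \<partial>M) = ennreal ((1 / sqrt (1 - 2*c)) ^ nm)"
      unfolding Meq Sm_def nm_def
      by (rule mgf_train[OF Vp ImN _ \<open>c < 1/2\<close>]) (auto simp: V_def Im_def)
  qed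
  define B1 where "B1 = {x\<in>space M. real np * (1 + delta) \<le> Sp x}"
  define B2 where "B2 = {x\<in>space M. Sp x \<le> real np * (1 - delta)}"
  define B3 where "B3 = {x\<in>space M. real nm * (1 + delta) \<le> Sm x}"
  define B4 where "B4 = {x\<in>space M. Sm x \<le> real nm * (1 - delta)}"
  have pB1: "prob B1 \<le> exp (- real np * delta^2 / 8)" unfolding B1_def using CP.upper1 dl d1 by simp
  have pB2: "prob B2 \<le> exp (- real np * delta^2 / 8)" unfolding B2_def using CP.lower dl d1 by simp
  have pB3: "prob B3 \<le> exp (- real nm * delta^2 / 8)" unfolding B3_def using CM.upper1 dl d1 by simp
  have pB4: "prob B4 \<le> exp (- real nm * delta^2 / 8)" unfolding B4_def using CM.lower dl d1 by simp
  have sB: "B1 \<in> events" "B2 \<in> events" "B3 \<in> events" "B4 \<in> events"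
    unfolding B1_def B2_def B3_def B4_def using mSp mSm by measurable
  define E where "E = {Xs \<in> space M. err_ss pp s2 beta k1 k2 (intercept k1 k2 N Ys Xs) TYPE('a) \<le> bound}"
  have mI: "(\<lambda>Xs. intercept k1 k2 N Ys Xs) \<in> borel_measurable M"
  proof -
    have m1: "(\<lambda>Xs. \<Sum>i\<in>Ip. psi_feat k1 k2 (Xs i)) \<in> borel_measurable M" unfolding Meq
      by (rule borel_measurable_sum, rule comp_meas) (use IpN in auto)
    have m2: "(\<lambda>Xs. \<Sum>i\<in>Im. psi_feat k1 k2 (Xs i)) \<in> borel_measurable M" unfolding Meq
      by (rule borel_measurable_sum, rule comp_meas) (use ImN in auto)
    show ?thesis unfolding intercept_def Ip_def[symmetric] Im_def[symmetric] using m1 m2 by measurable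
  qed
  have sE: "E \<in> events"
  proof -
    have "(\<lambda>Xs. err_ss pp s2 beta k1 k2 (intercept k1 k2 N Ys Xs) TYPE('a)) \<in> borel_measurable M"
      by (rule measurable_compose[OF mI err_meas[OF s2 bs]])
    then show ?thesis unfolding E_def by measurable
  qed
  have key: "space M - E \<subseteq> B1 \<union> B2 \<union> B3 \<union> B4"
  proof
    fix Xs assume X: "Xs \<in> space M - E"
    show "Xs \<in> B1 \<union> B2 \<union> B3 \<union> B4"
    proof (rule ccontr)
      assume "Xs \<notin> B1 \<union> B2 \<union> B3 \<union> B4"
      then have h: "Sp Xs < real np * (1 + delta)" "real np * (1 - delta) < Sp Xs"
         "Sm Xs < real nm * (1 + delta)" "real nm * (1 - delta) < Sm Xs"
        using X by (auto simp: B1_def B2_def B3_def B4_def)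
      define t where "t = (Sp Xs / card Ip + beta * (Sm Xs / card Im)) / 2"
      have sum1: "(\<Sum>i\<in>Ip. psi_feat k1 k2 (Xs i)) = k1 * s2 * Sp Xs + card Ip * k2"
        unfolding Sp_def psi_feat_def sum.distrib sum_distrib_left using s2
        by (simp add: field_simps)
      have sum2: "(\<Sum>i\<in>Im. psi_feat k1 k2 (Xs i)) = k1 * (beta * s2) * Sm Xs + card Im * k2"
        unfolding Sm_def psi_feat_def sum.distrib sum_distrib_left using bs b0 s2
        by (simp add: field_simps)
      have icp: "intercept k1 k2 N Ys Xs = k2 + k1 * s2 * t"
        unfolding intercept_def Ip_def[symmetric] Im_def[symmetric] sum1 sum2 t_def
        using Ipc Imc by (simp add: field_simps)
      have r1: "d * (1 - delta) < Sp Xs / card Ip" "Sp Xs / card Ip < d * (1 + delta)"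
        using h Ipc unfolding np_def d_def by (simp_all add: field_simps)
      have r2: "d * (1 - delta) < Sm Xs / card Im" "Sm Xs / card Im < d * (1 + delta)"
        using h Imc unfolding nm_def d_def by (simp_all add: field_simps)
      have r3: "beta * (d * (1 - delta)) < beta * (Sm Xs / card Im)" "beta * (Sm Xs / card Im) < beta * (d * (1 + delta))"
        by (rule mult_strict_left_mono[OF r2(1) b0], rule mult_strict_left_mono[OF r2(2) b0])
      have e1: "real DIM('a) * (1 - delta) * (1 + beta) / 2 = (d * (1 - delta) + beta * (d * (1 - delta))) / 2"
        unfolding d_def by (simp add: algebra_simps)
      have e2: "real DIM('a) * (1 + delta) * (1 + beta) / 2 = (d * (1 + delta) + beta * (d * (1 + delta))) / 2"
        unfolding d_def by (simp add: algebra_simps)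
      have tl: "real DIM('a) * (1 - delta) * (1 + beta) / 2 \<le> t"
        using r1 r3 unfolding t_def e1 by (intro divide_right_mono add_mono) auto
      have tu: "t \<le> real DIM('a) * (1 + delta) * (1 + beta) / 2"
        using r1 r3 unfolding t_def e2 by (intro divide_right_mono add_mono) auto
      have "err_ss pp s2 beta k1 k2 (intercept k1 k2 N Ys Xs) TYPE('a) \<le> bound"
        using err_bound[OF s2 beta pp k1 dl tl tu, of k2] unfolding icp Let_def bound_def d_def g_def .
      then show False using X unfolding E_def by auto
    qed
  qed
  have "prob (space M - E) \<le> prob (B1 \<union> B2 \<union> B3 \<union> B4)"
    using key sB by (intro finite_measure_mono) auto
  also have "\<dots> \<le> prob B1 + prob B2 + prob B3 + prob B4"
    using sB by (meson add_mono order_trans measure_Un_le sets.Un order_refl)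
  finally have "prob (space M - E) \<le> 2 * exp (- real nm * delta^2 / 8) + 2 * exp (- real np * delta^2 / 8)"
    using pB1 pB2 pB3 pB4 by linarith
  then have "prob E \<ge> 1 - 2 * exp (- real nm * delta^2 / 8) - 2 * exp (- real np * delta^2 / 8)"
    using prob_compl[OF sE] by linarith
  then show ?thesis
    unfolding Let_def M_def[symmetric] d_def[symmetric] g_def[symmetric] bound_def[symmetric]
      Ip_def[symmetric] Im_def[symmetric] E_def[symmetric]
    by (simp add: np_def nm_def d_def)
qed

theorem theorem3:
  fixes s1 beta pp k1 k2 delta :: real and N :: nat and Ys :: "nat \<Rightarrow> real"
    and TYPE_a :: "'a::euclidean_space itself"
  assumes "s1 > 0" and "beta > 3"
    and "0 < pp" and "pp < 1" and "1 - pp \<ge> 1/2"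
    and "k1 > 0" and "k2 > 0"
    and "\<forall>i<N. Ys i = 1 \<or> Ys i = -1"
    and "card {i. i < N \<and> Ys i = 1} \<ge> 1" and "card {i. i < N \<and> Ys i = -1} \<ge> 1"
    and "0 < delta" and "delta < (beta - 1) / (beta + 1)"
  shows
    "let d = real DIM('a); Np = real (card {i. i < N \<and> Ys i = 1});
         Nm = real (card {i. i < N \<and> Ys i = -1});
         M = (train_law (s1^2) beta N Ys :: (nat \<Rightarrow> 'a) measure);
         g = beta - 1 - (1 + beta) * delta;
         bound = (if (beta - 3) / (beta + 1) \<le> delta
                  then pp * exp (- d * g^2 / 32) + (1 - pp) * exp (- d * g^2 / (32 * beta^2))
                  else pp * exp (- d * g / 16) + (1 - pp) * exp (- d * g^2 / (32 * beta^2)))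
     in measure M {Xs \<in> space M.
           err_ss pp (s1^2) beta k1 k2 (intercept k1 k2 N Ys Xs) TYPE('a) \<le> bound}
        \<ge> 1 - 2 * exp (- Nm * d * delta^2 / 8) - 2 * exp (- Np * d * delta^2 / 8)"
  by (rule main) (use assms in auto)

end
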